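(* Let $G$ be a connected graph with vertex set $V$, and let $V'$ be the set of new vertices (one for each edge of $G$) so that both the subdivision $S(G)$ and the triangulation $T(G)$ have vertex set $V\cup V'$ (the new vertex associated with the edge $kl$ being the same in both graphs). Denote by $\Omega^S_{ij}$ and $\Omega^T_{ij}$ the resistance distances between $i$ and $j$ in $S(G)$ and $T(G)$ respectively. Then: (1) for $i,j\in V$, $\Omega^T_{ij}=\frac{1}{3}\Omega^S_{ij}$; (2) for $i\in V'$ and $j\in V$, $\Omega^T_{ij}=\frac{1}{3}\Omega^S_{ij}+\frac{1}{3}$; (3) for distinct $i,j\in V'$, $\Omega^T_{ij}=\frac{1}{3}\Omega^S_{ij}+\frac{2}{3}$.
   Context: All graphs are finite, undirected, without loops or multiple edges. For a connected graph $H$ and vertices $i,j$, the resistance distance between $i$ and $j$ is the effective resistance between them in the electrical network obtained from $H$ by replacing each edge by a unit resistor. The subdivision $S(G)$ is obtained from $G$ by replacing each edge $kl$ by a path $k\,w\,l$ through a new vertex $w$. The triangulation $T(G)$ is obtained from $G$ by adding, for each edge $kl$, a new vertex $w$ adjacent to both $k$ and $l$ (keeping the edge $kl$), so each edge becomes a triangle. *)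

theory Defs
  imports Complex_Main
begin

definition simple_graph :: "'a set \<Rightarrow> 'a set set \<Rightarrow> bool" where
  "simple_graph V E \<longleftrightarrow> finite V \<and>
     (\<forall>e\<in>E. \<exists>x y. x \<noteq> y \<and> x \<in> V \<and> y \<in> V \<and> e = {x, y})"

definition adj :: "'a set set \<Rightarrow> 'a \<Rightarrow> 'a \<Rightarrow> bool" where
  "adj E x y \<longleftrightarrow> x \<noteq> y \<and> {x, y} \<in> E"

definition connected_graph :: "'a set \<Rightarrow> 'a set set \<Rightarrow> bool" where
  "connected_graph V E \<longleftrightarrow> V \<noteq> {} \<and> (\<forall>x\<in>V. \<forall>y\<in>V. (adj E)\<^sup>*\<^sup>* x y)"

text \<open>Resistance distance: inject a unit current at i and extract it at j; by Kirchhoff's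
  current law and Ohm's law (unit resistors) the node potentials v satisfy
  sum over neighbours y of x of (v x - v y) = net injected current at x.
  The effective resistance is the resulting potential difference v i - v j
  (well defined for a connected graph, potentials being unique up to a constant).\<close>

definition resistance :: "'a set \<Rightarrow> 'a set set \<Rightarrow> 'a \<Rightarrow> 'a \<Rightarrow> real" where
  "resistance V E i j = (THE r. \<exists>v :: 'a \<Rightarrow> real.
      (\<forall>x\<in>V. (\<Sum>y\<in>{y\<in>V. adj E x y}. v x - v y) =
               (if x = i then 1 else 0) - (if x = j then 1 else 0))
      \<and> r = v i - v j)"

definition sub_vertices :: "'a set \<Rightarrow> 'a set set \<Rightarrow> ('a + 'a set) set" where
  "sub_vertices V E = Inl ` V \<union> Inr ` E"

definition subdivision_edges :: "'a set set \<Rightarrow> ('a + 'a set) set set" where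
  "subdivision_edges E = {{Inl k, Inr e} | k e. e \<in> E \<and> k \<in> e}"

definition triangulation_edges :: "'a set set \<Rightarrow> ('a + 'a set) set set" where
  "triangulation_edges E = subdivision_edges E \<union> (\<lambda>e. Inl ` e) ` E"

end

theory Submission
  imports Defs "Jordan_Normal_Form.Determinant"
begin


definition lap :: "'b set \<Rightarrow> 'b set set \<Rightarrow> ('b \<Rightarrow> real) \<Rightarrow> 'b \<Rightarrow> real" where
  "lap X F v x = (\<Sum>y\<in>{y\<in>X. adj F x y}. v x - v y)"

lemma adj_sym: "adj F x y = adj F y x"
  unfolding adj_def by (auto simp: insert_commute)

lemma harmonic_const:
  assumes fin: "finite X"
    and clos: "\<And>x y. adj F x y \<Longrightarrow> x \<in> X \<and> y \<in> X"
    and conn: "\<forall>x\<in>X. \<forall>y\<in>X. (adj F)\<^sup>*\<^sup>* x y"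
    and h: "\<And>x. x \<in> X \<Longrightarrow> lap X F d x = 0"
    and x: "x \<in> X" and y: "y \<in> X"
  shows "d x = d y"
proof -
  have ne: "X \<noteq> {}" using x by auto
  define m where "m = Max (d ` X)"
  have "m \<in> d ` X" unfolding m_def using fin ne by (intro Max_in) auto
  then obtain x0 where x0: "x0 \<in> X" "d x0 = m" by auto
  have le: "\<And>z. z \<in> X \<Longrightarrow> d z \<le> m" unfolding m_def using fin by auto
  have step: "d z = m" if "(adj F)\<^sup>*\<^sup>* x0 z" for z
    using that
  proof (induction rule: rtranclp_induct)
    case base then show ?case using x0 by simp
  next
    case (step a z)
    have aX: "a \<in> X" and zX: "z \<in> X" using clos[OF step.hyps(2)] by auto
    let ?N = "{y\<in>X. adj F a y}"
    have "(\<Sum>y\<in>?N. d a - d y) = 0" using h[OF aX] unfolding lap_def .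
    moreover have "\<forall>y\<in>?N. 0 \<le> d a - d y" using le step.IH by auto
    moreover have "finite ?N" using fin by auto
    ultimately have "\<forall>y\<in>?N. d a - d y = 0" using sum_nonneg_eq_0_iff[of ?N "\<lambda>y. d a - d y"] by simp
    then show ?case using zX step.hyps(2) step.IH by auto
  qed
  have "d x = m" "d y = m" using step conn x0 x y by auto
  then show ?thesis by simp
qed

lemma lap_sum_zero:
  assumes fin: "finite X"
  shows "(\<Sum>x\<in>X. lap X F v x) = 0"
proof -
  define S where "S = (\<Sum>x\<in>X. \<Sum>y\<in>X. (if adj F x y then v x - v y else 0))"
  have 1: "(\<Sum>x\<in>X. lap X F v x) = S"
    unfolding S_def lap_def using fin by (simp add: sum.inter_filter)
  have "S = (\<Sum>y\<in>X. \<Sum>x\<in>X. (if adj F x y then v x - v y else 0))"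
    unfolding S_def by (rule sum.swap)
  also have "\<dots> = (\<Sum>y\<in>X. \<Sum>x\<in>X. - (if adj F y x then v y - v x else 0))"
    by (intro sum.cong refl) (auto simp: adj_sym)
  also have "\<dots> = - S" unfolding S_def by (simp add: sum_negf)
  finally have "S = 0" by simp
  with 1 show ?thesis by simp
qed

lemma existence:
  assumes fin: "finite X" and clos: "\<And>x y. adj F x y \<Longrightarrow> x \<in> X \<and> y \<in> X"
    and conn: "\<forall>x\<in>X. \<forall>y\<in>X. (adj F)\<^sup>*\<^sup>* x y" and j: "j \<in> X"
    and sb: "(\<Sum>x\<in>X. b x) = 0"
  shows "\<exists>v. \<forall>x\<in>X. lap X F v x = b x"
proof -
  define n where "n = card X"
  obtain h where hb: "bij_betw h {0..<n} X" using ex_bij_betw_nat_finite[OF fin] n_def by auto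
  define g where "g = the_inv_into {0..<n} h"
  have gh: "g (h q) = q" if "q < n" for q
    unfolding g_def using that bij_betw_imp_inj_on[OF hb] by (simp add: the_inv_into_f_f)
  have hg: "h (g x) = x" if "x \<in> X" for x
    unfolding g_def using that hb by (simp add: f_the_inv_into_f_bij_betw)
  have gn: "g x < n" if "x \<in> X" for x
    unfolding g_def using that bij_betw_the_inv_into[OF hb] by (auto simp: bij_betw_def)
  have hX: "h q \<in> X" if "q < n" for q using hb that by (auto simp: bij_betw_def)
  define N where "N x = {y\<in>X. adj F x y}" for x
  define c where "c x y = (if x = y then real (card (N x)) else 0) - (if adj F x y then 1 else 0)
     + (if x = j \<and> y = j then 1 else 0)" for x y
  define M where "M v x = lap X F v x + (if x = j then v j else 0)" for v x
  have key: "(\<Sum>y\<in>X. c x y * v y) = M v x" if x: "x \<in> X" for x v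
  proof -
    have "(\<Sum>y\<in>X. c x y * v y) = (\<Sum>y\<in>X. (if x = y then real (card (N x)) * v y else 0))
       - (\<Sum>y\<in>X. if adj F x y then v y else 0) + (\<Sum>y\<in>X. if x = j \<and> y = j then v y else 0)"
      by (simp add: c_def ring_distribs sum.distrib sum_subtractf if_distrib[where f="\<lambda>a. a * _"] cong: if_cong)
    also have "\<dots> = real (card (N x)) * v x - (\<Sum>y\<in>N x. v y) + (if x = j then v j else 0)"
      using x fin by (auto simp: N_def sum.inter_filter sum.delta)
    also have "\<dots> = M v x"
      unfolding M_def lap_def N_def[symmetric] by (simp add: sum_subtractf)
    finally show ?thesis .
  qed
  define A where "A = mat n n (\<lambda>(p,q). c (h p) (h q))"
  have Ac: "A \<in> carrier_mat n n" unfolding A_def by simp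
  have Av: "(A *\<^sub>v vec n (\<lambda>q. v (h q))) $ p = M v (h p)" if p: "p < n" for v p
  proof -
    have "(A *\<^sub>v vec n (\<lambda>q. v (h q))) $ p = (\<Sum>q\<in>{0..<n}. c (h p) (h q) * v (h q))"
      using p unfolding A_def by (simp add: scalar_prod_def)
    also have "\<dots> = (\<Sum>y\<in>X. c (h p) y * v y)"
      by (rule sum.reindex_bij_betw[OF hb])
    also have "\<dots> = M v (h p)" using key hX p by simp
    finally show ?thesis .
  qed
  have wrep: "w = vec n (\<lambda>q. (\<lambda>y. w $ g y) (h q))" if "w \<in> carrier_vec n" for w :: "real vec"
    using that by (intro eq_vecI) (auto simp: gh)
  have Msum: "(\<Sum>x\<in>X. M v x) = v j" for v
    unfolding M_def using fin j by (simp add: sum.distrib lap_sum_zero sum.delta)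
  have det: "det A \<noteq> 0"
  proof
    assume "det A = 0"
    then obtain w where w: "w \<in> carrier_vec n" "w \<noteq> 0\<^sub>v n" "A *\<^sub>v w = 0\<^sub>v n"
      using det_0_iff_vec_prod_zero_field[OF Ac] by auto
    define v where "v y = w $ g y" for y
    have wv: "w = vec n (\<lambda>q. v (h q))" using wrep[OF w(1)] unfolding v_def .
    have Mv: "M v x = 0" if x: "x \<in> X" for x
    proof -
      have "M v x = M v (h (g x))" using hg x by simp
      also have "\<dots> = (A *\<^sub>v w) $ g x" using Av[OF gn[OF x], of v] wv by simp
      also have "\<dots> = 0" using w(3) gn[OF x] by simp
      finally show ?thesis .
    qed
    have vj: "v j = 0" using Msum[of v] Mv by simp
    have lv: "lap X F v x = 0" if "x \<in> X" for x using Mv[OF that] vj unfolding M_def by (cases "x = j") auto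
    have v0: "v x = 0" if "x \<in> X" for x
      using harmonic_const[OF fin clos conn lv that j] vj by simp
    have "w = 0\<^sub>v n" using w(1) v0 hX by (intro eq_vecI) (auto simp: v_def[symmetric] wv)
    with w(2) show False by simp
  qed
  have "A \<in> Units (ring_mat TYPE(real) n ())" by (rule det_non_zero_imp_unit[OF Ac det])
  then obtain B where B: "B \<in> carrier_mat n n" "A * B = 1\<^sub>m n"
    unfolding Units_def ring_mat_def by auto
  define bv where "bv = vec n (\<lambda>q. b (h q))"
  define w where "w = B *\<^sub>v bv"
  have wc: "w \<in> carrier_vec n" unfolding w_def bv_def using B by simp
  have Aw: "A *\<^sub>v w = bv"
    using assoc_mult_mat_vec[of A n n B n bv] B Ac by (simp add: w_def bv_def)
  define v where "v y = w $ g y" for y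
  have wv: "w = vec n (\<lambda>q. v (h q))" using wrep[OF wc] unfolding v_def .
  have Mv: "M v x = b x" if x: "x \<in> X" for x
  proof -
    have "M v x = M v (h (g x))" using hg x by simp
    also have "\<dots> = (A *\<^sub>v w) $ g x" using Av[OF gn[OF x], of v] wv by simp
    also have "\<dots> = b x" using Aw gn[OF x] hg[OF x] by (simp add: bv_def)
    finally show ?thesis .
  qed
  have "v j = 0" using Msum[of v] Mv sb by (metis sum.cong)
  then have "\<forall>x\<in>X. lap X F v x = b x" using Mv unfolding M_def by (metis add.right_neutral)
  then show ?thesis by blast
qed

lemma lap_diff: "lap X F (\<lambda>x. w x - v x) x = lap X F w x - lap X F v x"
  unfolding lap_def by (simp add: sum_subtractf[symmetric] algebra_simps)

lemma resistance_eq: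
  assumes fin: "finite X" and clos: "\<And>x y. adj F x y \<Longrightarrow> x \<in> X \<and> y \<in> X"
    and conn: "\<forall>x\<in>X. \<forall>y\<in>X. (adj F)\<^sup>*\<^sup>* x y" and i: "i \<in> X" and j: "j \<in> X"
    and v: "\<forall>x\<in>X. lap X F v x = (if x = i then 1 else 0) - (if x = j then 1 else 0)"
  shows "resistance X F i j = v i - v j"
  unfolding resistance_def
proof (rule the_equality)
  show "\<exists>v'. (\<forall>x\<in>X. (\<Sum>y\<in>{y \<in> X. adj F x y}. v' x - v' y) =
       (if x = i then 1 else 0) - (if x = j then 1 else 0)) \<and> v i - v j = v' i - v' j"
    using v unfolding lap_def by blast
next
  fix r :: real assume "\<exists>w. (\<forall>x\<in>X. (\<Sum>y\<in>{y \<in> X. adj F x y}. w x - w y) =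
       (if x = i then 1 else 0) - (if x = j then 1 else 0)) \<and> r = w i - w j"
  then obtain w where w: "\<forall>x\<in>X. lap X F w x = (if x = i then 1 else 0) - (if x = j then 1 else 0)"
    and r: "r = w i - w j" unfolding lap_def by blast
  have "lap X F (\<lambda>x. w x - v x) x = 0" if "x \<in> X" for x
    using w v that by (simp add: lap_diff)
  from harmonic_const[OF fin clos conn this i j] r show "r = v i - v j" by simp
qed



context
  fixes V :: "'a set" and E :: "'a set set"
  assumes sg: "simple_graph V E"
begin

lemma finV: "finite V" using sg by (simp add: simple_graph_def)
lemma edgeE: "e \<in> E \<Longrightarrow> \<exists>x y. x \<noteq> y \<and> x \<in> V \<and> y \<in> V \<and> e = {x, y}"
  using sg by (simp add: simple_graph_def)
lemma EsubV: "e \<in> E \<Longrightarrow> e \<subseteq> V"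
proof -
  assume "e \<in> E"
  then obtain x y where "x \<in> V" "y \<in> V" "e = {x, y}" using edgeE by blast
  then show ?thesis by simp
qed
lemma finE: "finite E"
proof -
  have "E \<subseteq> Pow V" using EsubV by blast
  then show ?thesis by (rule finite_subset) (simp add: finV)
qed
lemma card_e: "e \<in> E \<Longrightarrow> card e = 2"
proof -
  assume "e \<in> E"
  then obtain x y where "x \<noteq> y" "e = {x, y}" using edgeE by blast
  then show ?thesis by simp
qed
lemma fin_e: "e \<in> E \<Longrightarrow> finite e" using card_e card.infinite by fastforce

lemma finX: "finite (sub_vertices V E)"
  unfolding sub_vertices_def using finV finE by simp

lemma closS: "adj (subdivision_edges E) x y \<Longrightarrow> x \<in> sub_vertices V E \<and> y \<in> sub_vertices V E"
  unfolding adj_def subdivision_edges_def sub_vertices_def using EsubV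
  by (auto simp: doubleton_eq_iff)

lemma closT: "adj (triangulation_edges E) x y \<Longrightarrow> x \<in> sub_vertices V E \<and> y \<in> sub_vertices V E"
proof -
  assume a: "adj (triangulation_edges E) x y"
  then have ne: "x \<noteq> y" and m: "{x,y} \<in> subdivision_edges E \<or> (\<exists>e\<in>E. {x,y} = Inl ` e)"
    unfolding adj_def triangulation_edges_def by auto
  from m show ?thesis
  proof
    assume "{x,y} \<in> subdivision_edges E"
    then show ?thesis using closS ne unfolding adj_def by blast
  next
    assume "\<exists>e\<in>E. {x,y} = Inl ` e"
    then obtain e where e: "e \<in> E" "{x,y} = Inl ` e" by blast
    then have "x \<in> Inl ` V" "y \<in> Inl ` V" using EsubV[OF e(1)] by (metis image_mono insertI1 insert_commute subsetD)+
    then show ?thesis unfolding sub_vertices_def by blast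
  qed
qed

lemma NS_r: "e \<in> E \<Longrightarrow> {y \<in> sub_vertices V E. adj (subdivision_edges E) (Inr e) y} = Inl ` e"
  unfolding adj_def subdivision_edges_def sub_vertices_def using EsubV
  by (auto simp: doubleton_eq_iff)

lemma NS_l: "k \<in> V \<Longrightarrow> {y \<in> sub_vertices V E. adj (subdivision_edges E) (Inl k) y} = Inr ` {e\<in>E. k \<in> e}"
  unfolding adj_def subdivision_edges_def sub_vertices_def using EsubV
  by (auto simp: doubleton_eq_iff)

lemma NT_r: "e \<in> E \<Longrightarrow> {y \<in> sub_vertices V E. adj (triangulation_edges E) (Inr e) y} = Inl ` e"
  unfolding adj_def triangulation_edges_def subdivision_edges_def sub_vertices_def using EsubV
  by (auto simp: doubleton_eq_iff)

lemma NT_l: "k \<in> V \<Longrightarrow> {y \<in> sub_vertices V E. adj (triangulation_edges E) (Inl k) y}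
   = Inr ` {e\<in>E. k \<in> e} \<union> Inl ` {l\<in>V. adj E k l}"
proof -
  assume k: "k \<in> V"
  have key: "({Inl k, Inl l} = (Inl ` e :: ('a + 'a set) set)) \<longleftrightarrow> (e = {k, l})" for l and e :: "'a set"
  proof -
    have "{Inl k, Inl l} = (Inl ` {k, l} :: ('a + 'a set) set)" by simp
    then show ?thesis using inj_image_eq_iff[OF inj_Inl, of e "{k,l}"] by auto
  qed
  have noR: "{Inl k, Inr e'} \<noteq> (Inl ` e :: ('a + 'a set) set)" for e' and e :: "'a set" by auto
  have 1: "{y \<in> sub_vertices V E. adj (triangulation_edges E) (Inl k) y}
     = {y \<in> sub_vertices V E. adj (subdivision_edges E) (Inl k) y}
       \<union> {y \<in> sub_vertices V E. Inl k \<noteq> y \<and> {Inl k, y} \<in> (\<lambda>e. Inl ` e) ` E}"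
    unfolding adj_def triangulation_edges_def by blast
  have 2: "{y \<in> sub_vertices V E. Inl k \<noteq> y \<and> {Inl k, y} \<in> (\<lambda>e. Inl ` e) ` E}
     = Inl ` {l\<in>V. adj E k l}"
  proof (intro equalityI subsetI)
    fix y assume "y \<in> {y \<in> sub_vertices V E. Inl k \<noteq> y \<and> {Inl k, y} \<in> (\<lambda>e. Inl ` e) ` E}"
    then obtain e where y: "y \<in> sub_vertices V E" "Inl k \<noteq> y" "e \<in> E" "{Inl k, y} = Inl ` e" by auto
    then obtain l where l: "y = Inl l" using noR by (cases y) blast+
    then have "e = {k, l}" using key y(4) by simp
    then show "y \<in> Inl ` {l\<in>V. adj E k l}" using y l unfolding adj_def sub_vertices_def by auto
  next
    fix y :: "'a + 'a set" assume "y \<in> Inl ` {l\<in>V. adj E k l}"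
    then obtain l where l: "y = Inl l" "l \<in> V" "k \<noteq> l" "{k,l} \<in> E" unfolding adj_def by auto
    have "{Inl k, y} = Inl ` {k, l}" using l(1) by simp
    then have "{Inl k, y} \<in> (\<lambda>e. Inl ` e) ` E" using l(4) by blast
    then show "y \<in> {y \<in> sub_vertices V E. Inl k \<noteq> y \<and> {Inl k, y} \<in> (\<lambda>e. Inl ` e) ` E}"
      using l unfolding sub_vertices_def by auto
  qed
  show ?thesis unfolding 1 2 NS_l[OF k] ..
qed

lemma adjS_edge: "e \<in> E \<Longrightarrow> k \<in> e \<Longrightarrow>
   adj (subdivision_edges E) (Inl k) (Inr e) \<and> adj (subdivision_edges E) (Inr e) (Inl k)"
  unfolding adj_def subdivision_edges_def by (auto simp: insert_commute)

lemma connS: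
  assumes cg: "connected_graph V E"
  shows "\<forall>x\<in>sub_vertices V E. \<forall>y\<in>sub_vertices V E. (adj (subdivision_edges E))\<^sup>*\<^sup>* x y"
proof -
  let ?R = "adj (subdivision_edges E)"
  have lift: "?R\<^sup>*\<^sup>* (Inl k) (Inl l)" if "(adj E)\<^sup>*\<^sup>* k l" for k l
    using that
  proof (induction rule: rtranclp_induct)
    case base then show ?case by simp
  next
    case (step a c)
    then have e: "{a,c} \<in> E" unfolding adj_def by simp
    have "?R (Inl a) (Inr {a,c})" "?R (Inr {a,c}) (Inl c)" using adjS_edge[OF e] by auto
    then show ?case using step.IH
      by (meson rtranclp.rtrancl_into_rtrancl)
  qed
  have toV: "\<exists>k\<in>V. ?R\<^sup>*\<^sup>* x (Inl k) \<and> ?R\<^sup>*\<^sup>* (Inl k) x" if x: "x \<in> sub_vertices V E" for x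
  proof (cases x)
    case (Inl k)
    then show ?thesis using x unfolding sub_vertices_def by auto
  next
    case (Inr e)
    then have e: "e \<in> E" using x unfolding sub_vertices_def by auto
    then obtain p q where pq: "p \<in> V" "e = {p, q}" using edgeE by blast
    then have "?R (Inl p) (Inr e)" "?R (Inr e) (Inl p)" using adjS_edge[OF e, of p] by auto
    then show ?thesis using Inr pq by (meson r_into_rtranclp)
  qed
  show ?thesis
  proof (intro ballI)
    fix x y assume x: "x \<in> sub_vertices V E" and y: "y \<in> sub_vertices V E"
    obtain k where k: "k \<in> V" "?R\<^sup>*\<^sup>* x (Inl k)" using toV[OF x] by blast
    obtain l where l: "l \<in> V" "?R\<^sup>*\<^sup>* (Inl l) y" using toV[OF y] by blast
    have "(adj E)\<^sup>*\<^sup>* k l" using cg k l unfolding connected_graph_def by blast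
    from lift[OF this] k l show "?R\<^sup>*\<^sup>* x y" by (meson rtranclp_trans)
  qed
qed

lemma connT:
  assumes cg: "connected_graph V E"
  shows "\<forall>x\<in>sub_vertices V E. \<forall>y\<in>sub_vertices V E. (adj (triangulation_edges E))\<^sup>*\<^sup>* x y"
proof -
  have m: "adj (subdivision_edges E) a b \<Longrightarrow> adj (triangulation_edges E) a b" for a b
    unfolding adj_def triangulation_edges_def by auto
  show ?thesis using connS[OF cg] by (metis m mono_rtranclp)
qed

lemma sumG:
  assumes k: "k \<in> V" and g: "g k = 0"
  shows "(\<Sum>l\<in>{l\<in>V. adj E k l}. g l) = (\<Sum>e\<in>{e\<in>E. k \<in> e}. \<Sum>l\<in>e. g l)"
proof -
  let ?N = "{l\<in>V. adj E k l}"
  let ?f = "\<lambda>l. {k, l}"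
  have inj: "inj_on ?f ?N" unfolding inj_on_def adj_def by (auto simp: doubleton_eq_iff)
  have img: "?f ` ?N = {e\<in>E. k \<in> e}"
  proof (intro equalityI subsetI)
    fix e assume "e \<in> ?f ` ?N" then show "e \<in> {e\<in>E. k \<in> e}" unfolding adj_def by auto
  next
    fix e assume e: "e \<in> {e\<in>E. k \<in> e}"
    then obtain x y where xy: "x \<noteq> y" "x \<in> V" "y \<in> V" "e = {x, y}" using edgeE by blast
    show "e \<in> ?f ` ?N"
    proof (cases "k = x")
      case True
      then have "e = ?f y" "y \<in> ?N" using xy e unfolding adj_def by auto
      then show ?thesis by blast
    next
      case False
      then have "k = y" using e xy by auto
      then have "e = ?f x" "x \<in> ?N" using xy e unfolding adj_def by (auto simp: insert_commute)
      then show ?thesis by blast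
    qed
  qed
  have "(\<Sum>e\<in>{e\<in>E. k \<in> e}. \<Sum>l\<in>e. g l) = (\<Sum>l\<in>?N. \<Sum>m\<in>{k,l}. g m)"
    unfolding img[symmetric] by (rule sum.reindex[OF inj, unfolded comp_def])
  also have "\<dots> = (\<Sum>l\<in>?N. g l)"
    by (intro sum.cong refl) (auto simp: adj_def g)
  finally show ?thesis by simp
qed

lemma main:
  assumes cg: "connected_graph V E"
    and a: "a \<in> sub_vertices V E" and c: "c \<in> sub_vertices V E"
  shows "resistance (sub_vertices V E) (triangulation_edges E) a c =
     resistance (sub_vertices V E) (subdivision_edges E) a c / 3
     + (case a of Inl _ \<Rightarrow> 0 | Inr _ \<Rightarrow> (1::real) - (if a = c then 1 else 0)) / 3
     - (case c of Inl _ \<Rightarrow> 0 | Inr _ \<Rightarrow> (if c = a then 1 else 0) - (1::real)) / 3"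
proof -
  let ?X = "sub_vertices V E"
  let ?S = "subdivision_edges E"
  let ?T = "triangulation_edges E"
  define b where "b x = (if x = a then 1 else 0) - (if x = c then 1 else (0::real))" for x
  have sb: "(\<Sum>x\<in>?X. b x) = 0"
    unfolding b_def using finX a c by (simp add: sum_subtractf sum.delta)
  obtain v where v: "\<forall>x\<in>?X. lap ?X ?S v x = b x"
    using existence[OF finX closS connS[OF cg] a sb] by blast
  define u where "u x = (case x of Inl _ \<Rightarrow> v x / 3 | Inr _ \<Rightarrow> (v x + b x) / 3)" for x
  have uL: "u (Inl k) = v (Inl k) / 3" for k unfolding u_def by simp
  have uR: "u (Inr e) = (v (Inr e) + b (Inr e)) / 3" for e unfolding u_def by simp
  have Sr: "b (Inr e) = 2 * v (Inr e) - (\<Sum>l\<in>e. v (Inl l))" if e: "e \<in> E" for e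
  proof -
    have eX: "Inr e \<in> ?X" using e unfolding sub_vertices_def by simp
    have "b (Inr e) = lap ?X ?S v (Inr e)" using v eX by simp
    also have "\<dots> = (\<Sum>y\<in>Inl ` e. v (Inr e) - v y)" unfolding lap_def NS_r[OF e] ..
    also have "\<dots> = (\<Sum>l\<in>e. v (Inr e) - v (Inl l))" by (simp add: sum.reindex)
    also have "\<dots> = 2 * v (Inr e) - (\<Sum>l\<in>e. v (Inl l))"
      using card_e[OF e] by (simp add: sum_subtractf)
    finally show ?thesis .
  qed
  have Tsol: "\<forall>x\<in>?X. lap ?X ?T u x = b x"
  proof
    fix x assume x: "x \<in> ?X"
    show "lap ?X ?T u x = b x"
    proof (cases x)
      case (Inr e)
      then have e: "e \<in> E" using x unfolding sub_vertices_def by auto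
      have "lap ?X ?T u x = (\<Sum>y\<in>Inl ` e. u (Inr e) - u y)" unfolding lap_def Inr NT_r[OF e] ..
      also have "\<dots> = (\<Sum>l\<in>e. u (Inr e) - u (Inl l))" by (simp add: sum.reindex)
      also have "\<dots> = 2 * u (Inr e) - (\<Sum>l\<in>e. v (Inl l)) / 3"
        using card_e[OF e] by (simp add: sum_subtractf uL sum_divide_distrib)
      also have "\<dots> = b x" using Sr[OF e] unfolding uR Inr by (simp add: field_simps)
      finally show ?thesis .
    next
      case (Inl k)
      then have k: "k \<in> V" using x unfolding sub_vertices_def by auto
      let ?Ek = "{e\<in>E. k \<in> e}"
      let ?Nk = "{l\<in>V. adj E k l}"
      have finEk: "finite ?Ek" using finE by simp
      have finNk: "finite ?Nk" using finV by simp
      have "lap ?X ?T u x = (\<Sum>y\<in>Inr ` ?Ek \<union> Inl ` ?Nk. u (Inl k) - u y)"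
        unfolding lap_def Inl NT_l[OF k] ..
      also have "\<dots> = (\<Sum>y\<in>Inr ` ?Ek. u (Inl k) - u y) + (\<Sum>y\<in>Inl ` ?Nk. u (Inl k) - u y)"
        by (rule sum.union_disjoint) (use finEk finNk in auto)
      also have "\<dots> = (\<Sum>e\<in>?Ek. u (Inl k) - u (Inr e)) + (\<Sum>l\<in>?Nk. u (Inl k) - u (Inl l))"
        by (simp add: sum.reindex)
      also have "(\<Sum>l\<in>?Nk. u (Inl k) - u (Inl l)) = (\<Sum>e\<in>?Ek. \<Sum>l\<in>e. u (Inl k) - u (Inl l))"
        by (rule sumG[OF k]) simp
      also have "(\<Sum>e\<in>?Ek. u (Inl k) - u (Inr e)) + (\<Sum>e\<in>?Ek. \<Sum>l\<in>e. u (Inl k) - u (Inl l))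
          = (\<Sum>e\<in>?Ek. v (Inl k) - v (Inr e))"
        unfolding sum.distrib[symmetric]
      proof (rule sum.cong[OF refl])
        fix e assume "e \<in> ?Ek"
        then have e: "e \<in> E" by simp
        have "(\<Sum>l\<in>e. u (Inl k) - u (Inl l)) = 2 * u (Inl k) - (\<Sum>l\<in>e. v (Inl l)) / 3"
          using card_e[OF e] by (simp add: sum_subtractf uL sum_divide_distrib)
        then show "u (Inl k) - u (Inr e) + (\<Sum>l\<in>e. u (Inl k) - u (Inl l)) = v (Inl k) - v (Inr e)"
          using Sr[OF e] unfolding uL uR by (simp add: field_simps)
      qed
      also have "\<dots> = (\<Sum>y\<in>Inr ` ?Ek. v (Inl k) - v y)" by (simp add: sum.reindex)
      also have "\<dots> = lap ?X ?S v x" unfolding lap_def Inl NS_l[OF k] ..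
      also have "\<dots> = b x" using v x by simp
      finally show ?thesis .
    qed
  qed
  have rS: "resistance ?X ?S a c = v a - v c"
    by (rule resistance_eq[OF finX closS connS[OF cg] a c]) (use v in \<open>unfold b_def\<close>)
  have rT: "resistance ?X ?T a c = u a - u c"
    by (rule resistance_eq[OF finX closT connT[OF cg] a c]) (use Tsol in \<open>unfold b_def\<close>)
  show ?thesis unfolding rS rT u_def b_def
    by (cases a; cases c) (auto simp: field_simps)
qed

end

theorem proposition4p2:
  fixes V :: "'a set" and E :: "'a set set"
  assumes "simple_graph V E" and "connected_graph V E"
  shows "(\<forall>i\<in>V. \<forall>j\<in>V.
            resistance (sub_vertices V E) (triangulation_edges E) (Inl i) (Inl j) =
            resistance (sub_vertices V E) (subdivision_edges E) (Inl i) (Inl j) / 3)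
       \<and> (\<forall>i\<in>E. \<forall>j\<in>V.
            resistance (sub_vertices V E) (triangulation_edges E) (Inr i) (Inl j) =
            resistance (sub_vertices V E) (subdivision_edges E) (Inr i) (Inl j) / 3 + 1 / 3)
       \<and> (\<forall>i\<in>E. \<forall>j\<in>E. i \<noteq> j \<longrightarrow>
            resistance (sub_vertices V E) (triangulation_edges E) (Inr i) (Inr j) =
            resistance (sub_vertices V E) (subdivision_edges E) (Inr i) (Inr j) / 3 + 2 / 3)"
proof -
  have L: "i \<in> V \<Longrightarrow> Inl i \<in> sub_vertices V E" for i by (simp add: sub_vertices_def)
  have R: "i \<in> E \<Longrightarrow> Inr i \<in> sub_vertices V E" for i by (simp add: sub_vertices_def)
  note M = main[OF assms(1) assms(2)]
  show ?thesis
  proof (intro conjI ballI impI)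
    fix i j assume "i \<in> V" "j \<in> V"
    then show "resistance (sub_vertices V E) (triangulation_edges E) (Inl i) (Inl j) =
            resistance (sub_vertices V E) (subdivision_edges E) (Inl i) (Inl j) / 3"
      using M[OF L L] by simp
  next
    fix i j assume "i \<in> E" "j \<in> V"
    then show "resistance (sub_vertices V E) (triangulation_edges E) (Inr i) (Inl j) =
            resistance (sub_vertices V E) (subdivision_edges E) (Inr i) (Inl j) / 3 + 1 / 3"
      using M[OF R L] by simp
  next
    fix i j assume "i \<in> E" "j \<in> E" "i \<noteq> j"
    then show "resistance (sub_vertices V E) (triangulation_edges E) (Inr i) (Inr j) =
            resistance (sub_vertices V E) (subdivision_edges E) (Inr i) (Inr j) / 3 + 2 / 3"
      using M[OF R R] by simp
  qed
qed

end
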